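(* Let $X$ be a connected involutive rack. If $(V,\pi)$ is a strong irreducible representation of $X$ such that there exists $x_0\in X$ with $\{v\in V:\pi_{x_0}(v)=v\}=\{0\}$, then $V$ is one-dimensional.
   Context: A rack is a set $X$ with a binary operation $\rhd$ such that each $x\mapsto x\rhd y$ is bijective and $(x\rhd y)\rhd z=(x\rhd z)\rhd(y\rhd z)$. $X$ is involutive if $(x\rhd y)\rhd y=x$ for all $x,y$, and connected if for all $x,z\in X$ there is $y$ with $z=x\rhd y$. A stabilizing family of $X$ is a finite family $(u_1,\ldots,u_n)$ with $(\cdots(x\rhd u_1)\cdots)\rhd u_n=x$ for all $x$. A representation of $X$ is a complex vector space $V$ with $\pi:X\to GL(V)$ satisfying $\pi_{x\rhd y}=\pi_y\pi_x\pi_y^{-1}$; it is strong if $\pi_{u_n}\cdots\pi_{u_1}=\mathrm{id}_V$ for every stabilizing family $(u_1,\ldots,u_n)$, and irreducible if its only subspaces invariant under all $\pi_x$ are $\{0\}$ and $V$. *)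

theory Defs
  imports Complex_Main
begin

text \<open>Racks: a set (here: a type 'a) with a binary operation op, written x \<rhd> y = op x y.\<close>

definition rack :: "('a \<Rightarrow> 'a \<Rightarrow> 'a) \<Rightarrow> bool" where
  "rack op \<longleftrightarrow> (\<forall>y. bij (\<lambda>x. op x y)) \<and>
     (\<forall>x y z. op (op x y) z = op (op x z) (op y z))"

definition involutive_rack :: "('a \<Rightarrow> 'a \<Rightarrow> 'a) \<Rightarrow> bool" where
  "involutive_rack op \<longleftrightarrow> (\<forall>x y. op (op x y) y = x)"

definition connected_rack :: "('a \<Rightarrow> 'a \<Rightarrow> 'a) \<Rightarrow> bool" where
  "connected_rack op \<longleftrightarrow> (\<forall>x z. \<exists>y. z = op x y)"

text \<open>A stabilizing family (u_1,...,u_n) is given as the list [u_1,...,u_n];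
  foldl op x us = (...(x \<rhd> u_1)...) \<rhd> u_n.\<close>
definition stabilizing :: "('a \<Rightarrow> 'a \<Rightarrow> 'a) \<Rightarrow> 'a list \<Rightarrow> bool" where
  "stabilizing op us \<longleftrightarrow> (\<forall>x. foldl op x us = x)"

text \<open>Composition pi_{u_n} o ... o pi_{u_1} for us = [u_1,...,u_n].\<close>
definition rep_word :: "('a \<Rightarrow> 'v \<Rightarrow> 'v) \<Rightarrow> 'a list \<Rightarrow> 'v \<Rightarrow> 'v" where
  "rep_word \<pi> us = foldl (\<lambda>f u. \<pi> u \<circ> f) id us"

text \<open>Representations on a complex vector space V (the type 'v with scalar
  multiplication scale :: complex \<Rightarrow> 'v \<Rightarrow> 'v satisfying the vector space axioms).\<close>
definition rack_rep ::
  "(complex \<Rightarrow> 'v::ab_group_add \<Rightarrow> 'v) \<Rightarrow> ('a \<Rightarrow> 'a \<Rightarrow> 'a) \<Rightarrow> ('a \<Rightarrow> 'v \<Rightarrow> 'v) \<Rightarrow> bool" where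
  "rack_rep scale op \<pi> \<longleftrightarrow>
     (\<forall>x. Vector_Spaces.linear scale scale (\<pi> x) \<and> bij (\<pi> x)) \<and>
     (\<forall>x y. \<pi> (op x y) = \<pi> y \<circ> \<pi> x \<circ> inv (\<pi> y))"

definition strong_rep :: "('a \<Rightarrow> 'a \<Rightarrow> 'a) \<Rightarrow> ('a \<Rightarrow> 'v \<Rightarrow> 'v) \<Rightarrow> bool" where
  "strong_rep op \<pi> \<longleftrightarrow> (\<forall>us. stabilizing op us \<longrightarrow> rep_word \<pi> us = id)"

definition irreducible_rep ::
  "(complex \<Rightarrow> 'v::ab_group_add \<Rightarrow> 'v) \<Rightarrow> ('a \<Rightarrow> 'v \<Rightarrow> 'v) \<Rightarrow> bool" where
  "irreducible_rep scale \<pi> \<longleftrightarrow> (UNIV :: 'v set) \<noteq> {0} \<and>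
     (\<forall>W. module.subspace scale W \<longrightarrow> (\<forall>x. \<pi> x ` W \<subseteq> W) \<longrightarrow> W = {0} \<or> W = UNIV)"

end

theory Submission
  imports Defs
begin

theorem mainTheorem15:
  fixes op :: "'a \<Rightarrow> 'a \<Rightarrow> 'a"
    and scale :: "complex \<Rightarrow> 'v::ab_group_add \<Rightarrow> 'v"
    and \<pi> :: "'a \<Rightarrow> 'v \<Rightarrow> 'v"
  assumes "vector_space scale"
    and "rack op" and "involutive_rack op" and "connected_rack op"
    and "rack_rep scale op \<pi>"
    and "strong_rep op \<pi>"
    and "irreducible_rep scale \<pi>"
    and "\<exists>x0. {v. \<pi> x0 v = v} = {0}"
  shows "vector_space.dim scale (UNIV :: 'v set) = 1"
proof -
  interpret vs: vector_space scale by fact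
  obtain x0 where x0: "{v. \<pi> x0 v = v} = {0}" using assms(8) by blast
  have lin: "\<And>x. Vector_Spaces.linear scale scale (\<pi> x)" and bj: "\<And>x. bij (\<pi> x)"
    and conj: "\<And>x y. \<pi> (op x y) = \<pi> y \<circ> \<pi> x \<circ> inv (\<pi> y)"
    using assms(5) unfolding rack_rep_def by auto
  have add: "\<And>x a b. \<pi> x (a + b) = \<pi> x a + \<pi> x b"
    using lin by (meson module_hom_linearI module_hom.add)
  have neg: "\<And>x a. \<pi> x (- a) = - \<pi> x a"
    using lin by (meson module_hom_linearI module_hom.neg)
  have stab: "stabilizing op [x0, x0]"
    using assms(3) unfolding stabilizing_def involutive_rack_def by simp
  hence "rep_word \<pi> [x0, x0] = id" using assms(6) unfolding strong_rep_def by blast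
  hence sq: "\<And>v. \<pi> x0 (\<pi> x0 v) = v" unfolding rep_word_def by (simp add: fun_eq_iff)
  have m0: "\<And>v. \<pi> x0 v = - v"
  proof -
    fix v
    have "\<pi> x0 (v + \<pi> x0 v) = v + \<pi> x0 v" using add sq by (simp add: add.commute)
    hence "v + \<pi> x0 v = 0" using x0 by blast
    thus "\<pi> x0 v = - v" by (simp add: eq_neg_iff_add_eq_0 add.commute)
  qed
  have mall: "\<And>x v. \<pi> x v = - v"
  proof -
    fix x v
    obtain y where y: "x = op x0 y" using assms(4) unfolding connected_rack_def by blast
    have "\<pi> x v = \<pi> y (- inv (\<pi> y) v)" using y conj m0 by simp
    also have "\<dots> = - \<pi> y (inv (\<pi> y) v)" by (rule neg)
    also have "\<pi> y (inv (\<pi> y) v) = v" using bj by (meson bij_inv_eq_iff)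
    finally show "\<pi> x v = - v" .
  qed
  have irr: "UNIV \<noteq> ({0}::'v set)"
    using assms(7) unfolding irreducible_rep_def by blast
  have allsub: "W = {0} \<or> W = UNIV" if W: "vs.subspace W" for W
  proof -
    have "\<forall>x. \<pi> x ` W \<subseteq> W" using W mall vs.subspace_neg by auto
    thus ?thesis using assms(7) W unfolding irreducible_rep_def by blast
  qed
  obtain v :: 'v where v: "v \<noteq> 0" using irr by blast
  have "vs.span {v} \<noteq> {0}" using vs.span_base[of v "{v}"] v by auto
  hence sp: "vs.span {v} = UNIV" using allsub[OF vs.subspace_span] by blast
  have ind: "vs.independent {v}" using v vs.independent_insertI[of v "{}"] vs.span_empty by auto
  have "vs.dim (UNIV::'v set) = vs.dim (vs.span {v})" using sp by simp
  also have "\<dots> = card {v}" by (rule vs.dim_span_eq_card_independent[OF ind])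
  finally show ?thesis by simp
qed

end
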